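(* Let $K\ge 2$, $d_1\ge 1$, $d_k=2^{k-1}d_1$ for $k=1,\dots,K$, and $\sigma>0$. Let $x$ be a random vector in $\mathbb{R}^{d_K}$ with $\mathbb{E}|x|^2<\infty$, and set $x^{(K)}=x$ and $x^{(k-1)}=D_k(x^{(k)})$ for $k=K,\dots,2$. Direct model: let $x_0\sim\mathcal N(0,\sigma^2 I_{d_K})$ be independent of $x$, and define $$L_A=\mathbb{E}\big[|x-x_0|^2\big]=\mathbb{E}|x|^2+\mathbb{E}|x_0|^2 .$$ Cascaded model: let $x_0^{(1)}\sim\mathcal N(0,\sigma^2 I_{d_1})$ be independent of $x$. For $2\le k\le K$ let $$x_0^{(k)}=U_k\big(D_k(x^{(k)})\big)+\sigma_k\zeta_k,\qquad \sigma_k=2^{-(k-1)}\sigma,$$ where $\zeta_k\sim\mathcal N(0,I_{d_k})$ is independent of $x$. Define $$L_k=\mathbb{E}\big[|x^{(k)}-x_0^{(k)}|^2\big]\quad (1\le k\le K),\qquad L_B=\sum_{k=1}^K L_k .$$ Then $L_A>L_B$.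
   Context: $|\cdot|$ is the Euclidean norm. For $2\le k\le K$, fix a partition of the coordinate index set $\{1,\dots,d_k\}$ into $d_{k-1}$ disjoint blocks of size $2$. - The downsampling operator $D_k:\mathbb{R}^{d_k}\to\mathbb{R}^{d_{k-1}}$ sends $y$ to the vector whose $j$-th entry is the average of the entries of $y$ in the $j$-th block (neighborhood averaging). - The upsampling operator $U_k:\mathbb{R}^{d_{k-1}}\to\mathbb{R}^{d_k}$ sends $w$ to the vector whose entries in the $j$-th block all equal $w_j$ (neighborhood replication). For the linear interpolant $I_t=(1-t)x_0+tx_1$, the transport cost is $L=\int_0^1\mathbb{E}|\dot I_t|^2\,dt=\mathbb{E}|x_1-x_0|^2$. Accordingly, $L_A$ is the transport cost of a single-stage flow from Gaussian noise to $x$, and $L_k$ is the transport cost of stage $k$ of a cascade in which stage $k$ maps $x_0^{(k)}$ to $x^{(k)}$. *)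

theory Defs
  imports "HOL-Probability.Probability"
begin

text \<open>Vectors in R^n are represented as functions nat => real, only coordinates 0..n-1 matter.
  A partition of {0..<d_k} into blocks of size 2 is represented by a block-index map
  b : {0..<d_k} -> {0..<d_(k-1)} whose fibres all have exactly 2 elements.\<close>

definition dim :: "nat \<Rightarrow> nat \<Rightarrow> nat" where
  "dim d1 k = 2 ^ (k - 1) * d1"

definition sqnorm :: "nat \<Rightarrow> (nat \<Rightarrow> real) \<Rightarrow> real" where
  "sqnorm n v = (\<Sum>i<n. (v i)\<^sup>2)"

definition is_pair_partition :: "nat \<Rightarrow> nat \<Rightarrow> (nat \<Rightarrow> nat) \<Rightarrow> bool" where
  "is_pair_partition n m b \<longleftrightarrow> (\<forall>i<n. b i < m) \<and> (\<forall>j<m. card {i. i < n \<and> b i = j} = 2)"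

definition downs :: "(nat \<Rightarrow> nat) \<Rightarrow> nat \<Rightarrow> (nat \<Rightarrow> real) \<Rightarrow> (nat \<Rightarrow> real)" where
  "downs b n y = (\<lambda>j. (\<Sum>i\<in>{i. i < n \<and> b i = j}. y i) / 2)"

definition ups :: "(nat \<Rightarrow> nat) \<Rightarrow> (nat \<Rightarrow> real) \<Rightarrow> (nat \<Rightarrow> real)" where
  "ups b w = (\<lambda>i. w (b i))"

text \<open>levels blk d1 K m y = x^(K-m) when y = x^(K); blk k is the partition at level k.\<close>
primrec levels :: "(nat \<Rightarrow> nat \<Rightarrow> nat) \<Rightarrow> nat \<Rightarrow> nat \<Rightarrow> nat \<Rightarrow> (nat \<Rightarrow> real) \<Rightarrow> (nat \<Rightarrow> real)" where
  "levels blk d1 K 0 y = y"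
| "levels blk d1 K (Suc m) y = downs (blk (K - m)) (dim d1 (K - m)) (levels blk d1 K m y)"

definition level :: "(nat \<Rightarrow> nat \<Rightarrow> nat) \<Rightarrow> nat \<Rightarrow> nat \<Rightarrow> nat \<Rightarrow> (nat \<Rightarrow> real) \<Rightarrow> (nat \<Rightarrow> real)" where
  "level blk d1 K k y = levels blk d1 K (K - k) y"

definition rvec :: "'a measure \<Rightarrow> nat \<Rightarrow> ('a \<Rightarrow> nat \<Rightarrow> real) \<Rightarrow> bool" where
  "rvec M n X \<longleftrightarrow> (\<lambda>\<omega>. restrict (X \<omega>) {..<n}) \<in> M \<rightarrow>\<^sub>M PiM {..<n} (\<lambda>_. borel)"

definition gaussian_iso :: "'a measure \<Rightarrow> nat \<Rightarrow> real \<Rightarrow> ('a \<Rightarrow> nat \<Rightarrow> real) \<Rightarrow> bool" where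
  "gaussian_iso M n s X \<longleftrightarrow> rvec M n X \<and>
     distr M (PiM {..<n} (\<lambda>_. borel)) (\<lambda>\<omega>. restrict (X \<omega>) {..<n})
       = PiM {..<n} (\<lambda>_. density lborel (normal_density 0 s))"

definition indep_vec :: "'a measure \<Rightarrow> nat \<Rightarrow> ('a \<Rightarrow> nat \<Rightarrow> real) \<Rightarrow> nat \<Rightarrow> ('a \<Rightarrow> nat \<Rightarrow> real) \<Rightarrow> bool" where
  "indep_vec M n X m Y \<longleftrightarrow> prob_space.indep_var M
     (PiM {..<n} (\<lambda>_. borel)) (\<lambda>\<omega>. restrict (X \<omega>) {..<n})
     (PiM {..<m} (\<lambda>_. borel)) (\<lambda>\<omega>. restrict (Y \<omega>) {..<m})"

end

theory Submission
  imports Defs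
begin

lemma gauss_distr:
  assumes P: "prob_space M" and G: "gaussian_iso M n s Z" and i: "i < n" and s: "s > 0"
  shows "distributed M lborel (\<lambda>\<omega>. Z \<omega> i) (normal_density 0 s)"
proof -
  let ?Zr = "\<lambda>\<omega>. restrict (Z \<omega>) {..<n}"
  have mZ: "?Zr \<in> M \<rightarrow>\<^sub>M PiM {..<n} (\<lambda>_. borel)" using G by (simp add: gaussian_iso_def rvec_def)
  have comp: "(\<lambda>v. v i) \<in> PiM {..<n} (\<lambda>_. borel) \<rightarrow>\<^sub>M (borel :: real measure)"
    using i by (intro measurable_component_singleton) auto
  have eqf: "(\<lambda>\<omega>. Z \<omega> i) = (\<lambda>v. v i) \<circ> ?Zr" using i by (auto simp: fun_eq_iff)
  have mZi: "(\<lambda>\<omega>. Z \<omega> i) \<in> M \<rightarrow>\<^sub>M (lborel :: real measure)"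
    unfolding eqf using measurable_comp[OF mZ comp] by simp
  have "distr M lborel (\<lambda>\<omega>. Z \<omega> i) = distr M borel ((\<lambda>v. v i) \<circ> ?Zr)"
    unfolding eqf by (rule distr_cong) auto
  also have "\<dots> = distr (distr M (PiM {..<n} (\<lambda>_. borel)) ?Zr) borel (\<lambda>v. v i)"
    by (rule distr_distr[symmetric, OF comp mZ])
  also have "\<dots> = distr (PiM {..<n} (\<lambda>_. density lborel (normal_density 0 s))) borel (\<lambda>v. v i)"
    using G by (simp add: gaussian_iso_def)
  also have "\<dots> = distr (PiM {..<n} (\<lambda>_. density lborel (normal_density 0 s))) (density lborel (normal_density 0 s)) (\<lambda>v. v i)"
    by (rule distr_cong) auto
  also have "\<dots> = density lborel (normal_density 0 s)"
    using i by (intro distr_PiM_component) (auto intro: prob_space_normal_density[OF s])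
  finally show ?thesis unfolding distributed_def using mZi by auto
qed

lemma gauss_moments:
  assumes P: "prob_space M" and G: "gaussian_iso M n s Z" and i: "i < n" and s: "s > 0"
  shows "integrable M (\<lambda>\<omega>. Z \<omega> i)" "(\<integral>\<omega>. Z \<omega> i \<partial>M) = 0"
    "integrable M (\<lambda>\<omega>. (Z \<omega> i)\<^sup>2)" "(\<integral>\<omega>. (Z \<omega> i)\<^sup>2 \<partial>M) = s\<^sup>2"
proof -
  note D = gauss_distr[OF P G i s]
  have "integrable lborel (\<lambda>x. normal_density 0 s x * x)"
    using integrable_normal_moment[OF s, of 0 1] by simp
  then show "integrable M (\<lambda>\<omega>. Z \<omega> i)"
    using distributed_integrable[OF D, of "\<lambda>x. x"] by simp
  show "(\<integral>\<omega>. Z \<omega> i \<partial>M) = 0"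
    using distributed_integral[OF D, of "\<lambda>x. x"] integral_normal_moment_nz_1[OF s, of 0] by simp
  have "integrable lborel (\<lambda>x. normal_density 0 s x * x\<^sup>2)"
    using integrable_normal_moment[OF s, of 0 2] by simp
  then show "integrable M (\<lambda>\<omega>. (Z \<omega> i)\<^sup>2)"
    using distributed_integrable[OF D, of "\<lambda>x. x\<^sup>2"] by simp
  show "(\<integral>\<omega>. (Z \<omega> i)\<^sup>2 \<partial>M) = s\<^sup>2"
    using distributed_integral[OF D, of "\<lambda>x. x\<^sup>2"] integral_normal_moment_even[OF s, of 0 1]
    by (simp add: power2_eq_square)
qed

lemma noise_split:
  assumes P: "prob_space M" and G: "gaussian_iso M n s Z" and s: "s > 0"
    and I: "prob_space.indep_var M MA A (PiM {..<n} (\<lambda>_. borel)) (\<lambda>\<omega>. restrict (Z \<omega>) {..<n})"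
    and phi: "\<And>i. i < n \<Longrightarrow> \<phi> i \<in> borel_measurable MA"
    and int: "integrable M (\<lambda>\<omega>. sqnorm n (\<lambda>i. \<phi> i (A \<omega>)))"
  shows "(\<integral>\<omega>. sqnorm n (\<lambda>i. \<phi> i (A \<omega>) - c * Z \<omega> i) \<partial>M)
       = (\<integral>\<omega>. sqnorm n (\<lambda>i. \<phi> i (A \<omega>)) \<partial>M) + c\<^sup>2 * s\<^sup>2 * real n"
proof -
  interpret prob_space M by (rule P)
  have mA: "A \<in> M \<rightarrow>\<^sub>M MA" by (rule indep_var_rv1[OF I])
  have key: "integrable M (\<lambda>\<omega>. (\<phi> i (A \<omega>))\<^sup>2 - 2 * c * (\<phi> i (A \<omega>) * Z \<omega> i) + c\<^sup>2 * (Z \<omega> i)\<^sup>2)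
     \<and> (\<integral>\<omega>. (\<phi> i (A \<omega>))\<^sup>2 - 2 * c * (\<phi> i (A \<omega>) * Z \<omega> i) + c\<^sup>2 * (Z \<omega> i)\<^sup>2 \<partial>M)
       = (\<integral>\<omega>. (\<phi> i (A \<omega>))\<^sup>2 \<partial>M) + c\<^sup>2 * s\<^sup>2 \<and> integrable M (\<lambda>\<omega>. (\<phi> i (A \<omega>))\<^sup>2)"
    if i: "i < n" for i
  proof -
    note Zm = gauss_moments[OF P G i s]
    have mF: "(\<lambda>\<omega>. \<phi> i (A \<omega>)) \<in> borel_measurable M"
      using measurable_comp[OF mA phi[OF i]] by (simp add: comp_def)
    have iF2: "integrable M (\<lambda>\<omega>. (\<phi> i (A \<omega>))\<^sup>2)"
    proof (rule Bochner_Integration.integrable_bound[OF int])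
      show "(\<lambda>\<omega>. (\<phi> i (A \<omega>))\<^sup>2) \<in> borel_measurable M" using mF by measurable
      show "AE \<omega> in M. norm ((\<phi> i (A \<omega>))\<^sup>2) \<le> norm (sqnorm n (\<lambda>i. \<phi> i (A \<omega>)))"
      proof (rule AE_I2)
        fix \<omega>
        have "(\<phi> i (A \<omega>))\<^sup>2 \<le> sqnorm n (\<lambda>i. \<phi> i (A \<omega>))"
          unfolding sqnorm_def using i by (intro member_le_sum) auto
        then show "norm ((\<phi> i (A \<omega>))\<^sup>2) \<le> norm (sqnorm n (\<lambda>i. \<phi> i (A \<omega>)))" by simp
      qed
    qed
    have iF: "integrable M (\<lambda>\<omega>. \<phi> i (A \<omega>))"
    proof (rule Bochner_Integration.integrable_bound[of _ "\<lambda>\<omega>. 1 + (\<phi> i (A \<omega>))\<^sup>2"])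
      show "integrable M (\<lambda>\<omega>. 1 + (\<phi> i (A \<omega>))\<^sup>2)" using iF2 by simp
      show "(\<lambda>\<omega>. \<phi> i (A \<omega>)) \<in> borel_measurable M" by (rule mF)
      show "AE \<omega> in M. norm (\<phi> i (A \<omega>)) \<le> norm (1 + (\<phi> i (A \<omega>))\<^sup>2)"
      proof (rule AE_I2)
        fix \<omega> have "\<bar>t\<bar> \<le> 1 + t\<^sup>2" for t :: real
        proof -
          have "0 \<le> (\<bar>t\<bar> - 1)\<^sup>2" by simp
          hence "0 \<le> t\<^sup>2 - 2*\<bar>t\<bar> + 1" by (simp add: power2_diff)
          moreover have "0 \<le> t\<^sup>2" by simp
          ultimately show ?thesis by linarith
        qed
        then show "norm (\<phi> i (A \<omega>)) \<le> norm (1 + (\<phi> i (A \<omega>))\<^sup>2)" by simp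
      qed
    qed
    have comp: "(\<lambda>v. v i) \<in> PiM {..<n} (\<lambda>_. borel) \<rightarrow>\<^sub>M (borel :: real measure)"
      using i by (intro measurable_component_singleton) auto
    have "indep_var borel ((\<lambda>\<omega>. \<phi> i \<omega>) \<circ> A) borel ((\<lambda>v. v i) \<circ> (\<lambda>\<omega>. restrict (Z \<omega>) {..<n}))"
      by (rule indep_var_compose[OF I phi[OF i] comp])
    moreover have "(\<lambda>v. v i) \<circ> (\<lambda>\<omega>. restrict (Z \<omega>) {..<n}) = (\<lambda>\<omega>. Z \<omega> i)"
      using i by (auto simp: fun_eq_iff)
    ultimately have ind: "indep_var borel (\<lambda>\<omega>. \<phi> i (A \<omega>)) borel (\<lambda>\<omega>. Z \<omega> i)"
      by (simp add: comp_def)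
    have iP: "integrable M (\<lambda>\<omega>. \<phi> i (A \<omega>) * Z \<omega> i)"
      by (rule indep_var_integrable[OF ind iF Zm(1)])
    have eP: "(\<integral>\<omega>. \<phi> i (A \<omega>) * Z \<omega> i \<partial>M) = 0"
      using indep_var_lebesgue_integral[OF ind iF Zm(1)] Zm(2) by simp
    have i2: "integrable M (\<lambda>\<omega>. 2 * c * (\<phi> i (A \<omega>) * Z \<omega> i))" using iP by simp
    have i3: "integrable M (\<lambda>\<omega>. c\<^sup>2 * (Z \<omega> i)\<^sup>2)" using Zm(3) by simp
    have i12: "integrable M (\<lambda>\<omega>. (\<phi> i (A \<omega>))\<^sup>2 - 2 * c * (\<phi> i (A \<omega>) * Z \<omega> i))"
      using iF2 i2 by simp
    have "(\<integral>\<omega>. (\<phi> i (A \<omega>))\<^sup>2 - 2 * c * (\<phi> i (A \<omega>) * Z \<omega> i) + c\<^sup>2 * (Z \<omega> i)\<^sup>2 \<partial>M)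
      = (\<integral>\<omega>. (\<phi> i (A \<omega>))\<^sup>2 - 2 * c * (\<phi> i (A \<omega>) * Z \<omega> i) \<partial>M) + (\<integral>\<omega>. c\<^sup>2 * (Z \<omega> i)\<^sup>2 \<partial>M)"
      by (rule Bochner_Integration.integral_add[OF i12 i3])
    also have "(\<integral>\<omega>. (\<phi> i (A \<omega>))\<^sup>2 - 2 * c * (\<phi> i (A \<omega>) * Z \<omega> i) \<partial>M)
      = (\<integral>\<omega>. (\<phi> i (A \<omega>))\<^sup>2 \<partial>M) - (\<integral>\<omega>. 2 * c * (\<phi> i (A \<omega>) * Z \<omega> i) \<partial>M)"
      by (rule Bochner_Integration.integral_diff[OF iF2 i2])
    also have "(\<integral>\<omega>. 2 * c * (\<phi> i (A \<omega>) * Z \<omega> i) \<partial>M) = 0"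
      using eP by simp
    also have "(\<integral>\<omega>. c\<^sup>2 * (Z \<omega> i)\<^sup>2 \<partial>M) = c\<^sup>2 * s\<^sup>2"
      using Zm(4) by simp
    finally show ?thesis using iF2 i12 i3 by simp
  qed
  have pw: "sqnorm n (\<lambda>i. \<phi> i (A \<omega>) - c * Z \<omega> i) =
     (\<Sum>i<n. (\<phi> i (A \<omega>))\<^sup>2 - 2 * c * (\<phi> i (A \<omega>) * Z \<omega> i) + c\<^sup>2 * (Z \<omega> i)\<^sup>2)" for \<omega>
    unfolding sqnorm_def by (intro sum.cong) (auto simp: power2_eq_square algebra_simps)
  have "(\<integral>\<omega>. sqnorm n (\<lambda>i. \<phi> i (A \<omega>) - c * Z \<omega> i) \<partial>M)
     = (\<Sum>i<n. \<integral>\<omega>. (\<phi> i (A \<omega>))\<^sup>2 - 2 * c * (\<phi> i (A \<omega>) * Z \<omega> i) + c\<^sup>2 * (Z \<omega> i)\<^sup>2 \<partial>M)"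
    unfolding pw by (rule Bochner_Integration.integral_sum) (use key in auto)
  also have "\<dots> = (\<Sum>i<n. (\<integral>\<omega>. (\<phi> i (A \<omega>))\<^sup>2 \<partial>M) + c\<^sup>2 * s\<^sup>2)"
    using key by (intro sum.cong) auto
  also have "\<dots> = (\<Sum>i<n. (\<integral>\<omega>. (\<phi> i (A \<omega>))\<^sup>2 \<partial>M)) + c\<^sup>2 * s\<^sup>2 * real n"
    by (simp add: sum.distrib)
  also have "(\<Sum>i<n. (\<integral>\<omega>. (\<phi> i (A \<omega>))\<^sup>2 \<partial>M)) = (\<integral>\<omega>. sqnorm n (\<lambda>i. \<phi> i (A \<omega>)) \<partial>M)"
    unfolding sqnorm_def by (rule Bochner_Integration.integral_sum[symmetric]) (use key in auto)
  finally show ?thesis .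
qed


lemma sqnorm_cong: "(\<And>i. i < n \<Longrightarrow> f i = g i) \<Longrightarrow> sqnorm n f = sqnorm n g"
  unfolding sqnorm_def by (rule sum.cong) auto

lemma sqnorm_nonneg: "0 \<le> sqnorm n f"
  unfolding sqnorm_def by (rule sum_nonneg) auto

lemma pyth:
  assumes P: "is_pair_partition n m b"
  shows "sqnorm n y = 2 * sqnorm m (downs b n y) + sqnorm n (\<lambda>i. y i - ups b (downs b n y) i)"
proof -
  let ?B = "\<lambda>j. {i. i < n \<and> b i = j}"
  let ?D = "downs b n y"
  have grp: "(\<Sum>i<n. h i) = (\<Sum>j<m. \<Sum>i\<in>?B j. h i)" for h :: "nat \<Rightarrow> real"
  proof -
    have "(\<Sum>j\<in>{..<m}. \<Sum>i | i \<in> {..<n} \<and> b i = j. h i) = sum h {..<n}"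
      using P unfolding is_pair_partition_def by (intro sum.group) auto
    then show ?thesis by simp
  qed
  have blk: "(\<Sum>i\<in>?B j. (y i)\<^sup>2) = 2 * (?D j)\<^sup>2 + (\<Sum>i\<in>?B j. (y i - ups b ?D i)\<^sup>2)"
    if j: "j < m" for j
  proof -
    have "card (?B j) = 2" using P j unfolding is_pair_partition_def by auto
    then obtain p q where pq: "?B j = {p, q}" "p \<noteq> q" by (auto simp: card_2_iff)
    have bp: "b p = j" "b q = j" using pq(1) by blast+
    have D: "?D j = (y p + y q) / 2" unfolding downs_def pq(1) using pq(2) by simp
    have "(\<Sum>i\<in>?B j. (y i - ups b ?D i)\<^sup>2) = (y p - ?D j)\<^sup>2 + (y q - ?D j)\<^sup>2"
      unfolding pq(1) using pq(2) bp by (simp add: ups_def)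
    moreover have "(\<Sum>i\<in>?B j. (y i)\<^sup>2) = (y p)\<^sup>2 + (y q)\<^sup>2"
      unfolding pq(1) using pq(2) by simp
    ultimately show ?thesis unfolding D by (simp add: power2_eq_square field_simps)
  qed
  have "sqnorm n y = (\<Sum>j<m. \<Sum>i\<in>?B j. (y i)\<^sup>2)" unfolding sqnorm_def by (rule grp)
  also have "\<dots> = (\<Sum>j<m. 2 * (?D j)\<^sup>2 + (\<Sum>i\<in>?B j. (y i - ups b ?D i)\<^sup>2))"
    by (rule sum.cong) (auto simp: blk)
  also have "\<dots> = 2 * sqnorm m ?D + (\<Sum>j<m. \<Sum>i\<in>?B j. (y i - ups b ?D i)\<^sup>2)"
    by (simp add: sum.distrib sum_distrib_left sqnorm_def)
  also have "(\<Sum>j<m. \<Sum>i\<in>?B j. (y i - ups b ?D i)\<^sup>2) = sqnorm n (\<lambda>i. y i - ups b ?D i)"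
    unfolding sqnorm_def by (rule grp[symmetric])
  finally show ?thesis .
qed

lemma levels_agree:
  assumes "\<And>i. i < dim d1 K \<Longrightarrow> y i = y' i"
  shows "j < dim d1 (K - m) \<Longrightarrow> levels blk d1 K m y j = levels blk d1 K m y' j"
proof (induction m arbitrary: j)
  case 0 then show ?case using assms by simp
next
  case (Suc m)
  show ?case unfolding levels.simps downs_def
    by (intro arg_cong[where f="\<lambda>t. t / 2"] sum.cong refl) (simp add: Suc.IH)
qed

lemma levels_meas:
  "j < dim d1 (K - m) \<Longrightarrow> (\<lambda>v. levels blk d1 K m v j) \<in> borel_measurable (PiM {..<dim d1 K} (\<lambda>_. borel))"
proof (induction m arbitrary: j)
  case 0 then show ?case by (simp add: measurable_component_singleton)
next
  case (Suc m)
  show ?case unfolding levels.simps downs_def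
    by (intro borel_measurable_divide borel_measurable_sum Suc.IH measurable_const) auto
qed

lemma level_down:
  assumes "2 \<le> k" "k \<le> K"
  shows "downs (blk k) (dim d1 k) (level blk d1 K k y) = level blk d1 K (k - 1) y"
proof -
  have "K - (k - 1) = Suc (K - k)" "K - (K - k) = k" using assms by auto
  then show ?thesis unfolding level_def by simp
qed

lemma telescope:
  fixes a :: "nat \<Rightarrow> real"
  assumes "\<And>k. 0 \<le> a k" "1 \<le> K"
  shows "a 1 + (\<Sum>k\<in>{2..K}. a k - 2 * a (k - 1)) \<le> a K"
  using assms(2)
proof (induction K rule: dec_induct)
  case base then show ?case by simp
next
  case (step K)
  have "{2..Suc K} = insert (Suc K) {2..K}" using step by auto
  then have "(\<Sum>k\<in>{2..Suc K}. a k - 2 * a (k - 1)) = a (Suc K) - 2 * a K + (\<Sum>k\<in>{2..K}. a k - 2 * a (k - 1))"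
    by simp
  then show ?case using step.IH assms(1)[of K] by simp
qed

lemma geom:
  "1 \<le> K \<Longrightarrow> (\<Sum>k\<in>{2..K}. (1/2::real) ^ (k - 1)) = 1 - (1/2) ^ (K - 1)"
proof (induction K rule: dec_induct)
  case base then show ?case by simp
next
  case (step K)
  have "{2..Suc K} = insert (Suc K) {2..K}" using step by auto
  then show ?case using step by (cases K) (auto simp: field_simps)
qed


theorem theorem1:
  fixes M :: "'a measure" and K d1 :: nat and \<sigma> :: real
    and blk :: "nat \<Rightarrow> nat \<Rightarrow> nat"
    and x x0 x01 :: "'a \<Rightarrow> nat \<Rightarrow> real" and \<zeta> :: "nat \<Rightarrow> 'a \<Rightarrow> nat \<Rightarrow> real"
  assumes "prob_space M"
    and "K \<ge> 2" and "d1 \<ge> 1" and "\<sigma> > 0"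
    and "\<forall>k\<in>{2..K}. is_pair_partition (dim d1 k) (dim d1 (k - 1)) (blk k)"
    and "rvec M (dim d1 K) x"
    and "integrable M (\<lambda>\<omega>. sqnorm (dim d1 K) (x \<omega>))"
    and "gaussian_iso M (dim d1 K) \<sigma> x0"
    and "indep_vec M (dim d1 K) x (dim d1 K) x0"
    and "gaussian_iso M d1 \<sigma> x01"
    and "indep_vec M (dim d1 K) x d1 x01"
    and "\<forall>k\<in>{2..K}. gaussian_iso M (dim d1 k) 1 (\<zeta> k)"
    and "\<forall>k\<in>{2..K}. indep_vec M (dim d1 K) x (dim d1 k) (\<zeta> k)"
  shows "(\<integral>\<omega>. sqnorm (dim d1 K) (\<lambda>i. x \<omega> i - x0 \<omega> i) \<partial>M) >
         (\<integral>\<omega>. sqnorm d1 (\<lambda>i. level blk d1 K 1 (x \<omega>) i - x01 \<omega> i) \<partial>M)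
         + (\<Sum>k\<in>{2..K}. \<integral>\<omega>. sqnorm (dim d1 k)
              (\<lambda>i. level blk d1 K k (x \<omega>) i
                   - (ups (blk k) (downs (blk k) (dim d1 k) (level blk d1 K k (x \<omega>))) i
                      + (2 powr (- real (k - 1)) * \<sigma>) * \<zeta> k \<omega> i)) \<partial>M)"
proof -
  note P = assms(1)
  interpret prob_space M by (rule P)
  let ?N = "dim d1 K"
  let ?xr = "\<lambda>\<omega>. restrict (x \<omega>) {..<?N}"
  have K1: "1 \<le> K" using assms(2) by simp
  have dim1: "dim d1 1 = d1" by (simp add: dim_def)
  have mxr: "?xr \<in> M \<rightarrow>\<^sub>M PiM {..<?N} (\<lambda>_. borel)" using assms(6) by (simp add: rvec_def)
  have lev_xr: "level blk d1 K k y j = levels blk d1 K (K - k) (restrict y {..<?N}) j"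
    if "k \<le> K" "j < dim d1 k" for k j y
    unfolding level_def by (rule levels_agree) (use that in auto)
  have lev_meas: "(\<lambda>\<omega>. level blk d1 K k (x \<omega>) j) \<in> borel_measurable M"
    if "k \<le> K" "j < dim d1 k" for k j
  proof -
    have "(\<lambda>\<omega>. level blk d1 K k (x \<omega>) j) = (\<lambda>v. levels blk d1 K (K - k) v j) \<circ> ?xr"
      using that by (auto simp: lev_xr fun_eq_iff)
    moreover have "(\<lambda>v. levels blk d1 K (K - k) v j) \<in> borel_measurable (PiM {..<?N} (\<lambda>_. borel))"
      by (rule levels_meas) (use that in simp)
    ultimately show ?thesis using measurable_comp[OF mxr] by simp
  qed
  define a where "a k y = sqnorm (dim d1 k) (level blk d1 K k y)" for k y
  define R where "R k y = sqnorm (dim d1 k) (\<lambda>i. level blk d1 K k y i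
      - ups (blk k) (downs (blk k) (dim d1 k) (level blk d1 K k y)) i)" for k y
  have aK: "a K y = sqnorm ?N y" for y by (simp add: a_def level_def)
  have a_nn: "0 \<le> a k y" for k y by (simp add: a_def sqnorm_nonneg)
  have R_nn: "0 \<le> R k y" for k y by (simp add: R_def sqnorm_nonneg)
  have Rk: "R k y = a k y - 2 * a (k - 1) y" if "2 \<le> k" "k \<le> K" for k y
  proof -
    have part: "is_pair_partition (dim d1 k) (dim d1 (k - 1)) (blk k)" using assms(5) that by auto
    show ?thesis using pyth[OF part, of "level blk d1 K k y"] level_down[OF that, of blk d1 y]
      unfolding a_def R_def by simp
  qed
  have amono: "a k y \<le> a K y" if "1 \<le> k" "k \<le> K" for k y
    using that(2)
  proof (induction k rule: inc_induct)
    case (step n)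
    have "a n y \<le> a (Suc n) y" using Rk[of "Suc n" y] step that R_nn[of "Suc n" y] a_nn[of n y] by auto
    then show ?case using step by simp
  qed simp
  have Rle: "R k y \<le> a K y" if "2 \<le> k" "k \<le> K" for k y
    using Rk[OF that, of y] amono[of k y] that a_nn[of "k - 1" y] by simp
  have a_meas: "(\<lambda>\<omega>. a k (x \<omega>)) \<in> borel_measurable M" if "k \<le> K" for k
    unfolding a_def sqnorm_def
    by (intro borel_measurable_sum borel_measurable_power lev_meas) (use that in auto)
  have ups_eq: "ups (blk k) (downs (blk k) (dim d1 k) (level blk d1 K k y)) i
      = level blk d1 K (k - 1) y (blk k i)" if "2 \<le> k" "k \<le> K" for k y i
    using level_down[OF that, of blk d1 y] by (simp add: ups_def)
  have blk_lt: "blk k i < dim d1 (k - 1)" if "2 \<le> k" "k \<le> K" "i < dim d1 k" for k i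
    using assms(5) that by (auto simp: is_pair_partition_def)
  have R_meas: "(\<lambda>\<omega>. R k (x \<omega>)) \<in> borel_measurable M" if "2 \<le> k" "k \<le> K" for k
    unfolding R_def sqnorm_def ups_eq[OF that]
    by (intro borel_measurable_sum borel_measurable_power borel_measurable_diff lev_meas blk_lt)
       (use that in auto)
  have intK: "integrable M (\<lambda>\<omega>. a K (x \<omega>))" using assms(7) by (simp add: aK)
  have int_a: "integrable M (\<lambda>\<omega>. a k (x \<omega>))" if "1 \<le> k" "k \<le> K" for k
    by (rule Bochner_Integration.integrable_bound[OF intK a_meas[OF that(2)]])
       (use amono[OF that] a_nn in auto)
  have int_R: "integrable M (\<lambda>\<omega>. R k (x \<omega>))" if "2 \<le> k" "k \<le> K" for k
    by (rule Bochner_Integration.integrable_bound[OF intK R_meas[OF that]])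
       (use Rle[OF that] a_nn R_nn in auto)
  have I: "indep_var (PiM {..<?N} (\<lambda>_. borel)) ?xr (PiM {..<n} (\<lambda>_. borel)) (\<lambda>\<omega>. restrict (Z \<omega>) {..<n})"
    if "indep_vec M ?N x n Z" for n Z
    using that by (simp add: indep_vec_def)
  have eA: "(\<integral>\<omega>. sqnorm ?N (\<lambda>i. x \<omega> i - x0 \<omega> i) \<partial>M) = (\<integral>\<omega>. a K (x \<omega>) \<partial>M) + \<sigma>\<^sup>2 * real ?N"
  proof -
    have "(\<integral>\<omega>. sqnorm ?N (\<lambda>i. (\<lambda>i v. v i) i (?xr \<omega>) - 1 * x0 \<omega> i) \<partial>M)
       = (\<integral>\<omega>. sqnorm ?N (\<lambda>i. (\<lambda>i v. v i) i (?xr \<omega>)) \<partial>M) + 1\<^sup>2 * \<sigma>\<^sup>2 * real ?N"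
    proof (rule noise_split[OF P assms(8) assms(4) I[OF assms(9)]])
      show "(\<lambda>v. v i) \<in> borel_measurable (PiM {..<?N} (\<lambda>_. borel))" if "i < ?N" for i
        using that by (simp add: measurable_component_singleton)
      have "(\<lambda>\<omega>. sqnorm ?N (\<lambda>i. ?xr \<omega> i)) = (\<lambda>\<omega>. a K (x \<omega>))"
        by (auto simp: aK fun_eq_iff intro!: sqnorm_cong)
      then show "integrable M (\<lambda>\<omega>. sqnorm ?N (\<lambda>i. ?xr \<omega> i))" using intK by simp
    qed
    moreover have "(\<lambda>\<omega>. sqnorm ?N (\<lambda>i. (\<lambda>i v. v i) i (?xr \<omega>) - 1 * x0 \<omega> i)) = (\<lambda>\<omega>. sqnorm ?N (\<lambda>i. x \<omega> i - x0 \<omega> i))"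
      by (auto simp: fun_eq_iff intro!: sqnorm_cong)
    moreover have "(\<lambda>\<omega>. sqnorm ?N (\<lambda>i. (\<lambda>i v. v i) i (?xr \<omega>))) = (\<lambda>\<omega>. a K (x \<omega>))"
      by (auto simp: aK fun_eq_iff intro!: sqnorm_cong)
    ultimately show ?thesis by simp
  qed
  have e1: "(\<integral>\<omega>. sqnorm d1 (\<lambda>i. level blk d1 K 1 (x \<omega>) i - x01 \<omega> i) \<partial>M)
      = (\<integral>\<omega>. a 1 (x \<omega>) \<partial>M) + \<sigma>\<^sup>2 * real d1"
  proof -
    let ?\<phi> = "\<lambda>i v. levels blk d1 K (K - 1) v i"
    have lev1: "level blk d1 K 1 y i = levels blk d1 K (K - 1) (restrict y {..<?N}) i"
       "level blk d1 K (Suc 0) y i = levels blk d1 K (K - Suc 0) (restrict y {..<?N}) i"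
      if "i < d1" for i y using lev_xr[of 1 i y] that K1 by (simp_all add: dim_def)
    have pw: "(\<lambda>\<omega>. sqnorm d1 (\<lambda>i. ?\<phi> i (?xr \<omega>))) = (\<lambda>\<omega>. a 1 (x \<omega>))"
      unfolding a_def dim1 using K1 by (auto simp: fun_eq_iff dim1 lev1 intro!: sqnorm_cong)
    have "(\<integral>\<omega>. sqnorm d1 (\<lambda>i. ?\<phi> i (?xr \<omega>) - 1 * x01 \<omega> i) \<partial>M)
       = (\<integral>\<omega>. sqnorm d1 (\<lambda>i. ?\<phi> i (?xr \<omega>)) \<partial>M) + 1\<^sup>2 * \<sigma>\<^sup>2 * real d1"
    proof (rule noise_split[OF P assms(10) assms(4) I[OF assms(11)]])
      show "?\<phi> i \<in> borel_measurable (PiM {..<?N} (\<lambda>_. borel))" if "i < d1" for i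
        by (rule levels_meas) (use that K1 in \<open>simp add: dim_def\<close>)
      show "integrable M (\<lambda>\<omega>. sqnorm d1 (\<lambda>i. ?\<phi> i (?xr \<omega>)))"
        unfolding pw using int_a[of 1] K1 by simp
    qed
    moreover have "(\<lambda>\<omega>. sqnorm d1 (\<lambda>i. ?\<phi> i (?xr \<omega>) - 1 * x01 \<omega> i))
        = (\<lambda>\<omega>. sqnorm d1 (\<lambda>i. level blk d1 K 1 (x \<omega>) i - x01 \<omega> i))"
      using K1 by (auto simp: fun_eq_iff dim1 lev1 intro!: sqnorm_cong)
    ultimately show ?thesis unfolding pw by simp
  qed
  define c where "c k = 2 powr (- real (k - 1)) * \<sigma>" for k :: nat
  have ek: "(\<integral>\<omega>. sqnorm (dim d1 k)
              (\<lambda>i. level blk d1 K k (x \<omega>) i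
                   - (ups (blk k) (downs (blk k) (dim d1 k) (level blk d1 K k (x \<omega>))) i
                      + (2 powr (- real (k - 1)) * \<sigma>) * \<zeta> k \<omega> i)) \<partial>M)
      = (\<integral>\<omega>. R k (x \<omega>) \<partial>M) + (c k)\<^sup>2 * real (dim d1 k)"
    if k: "k \<in> {2..K}" for k
  proof -
    have k2: "2 \<le> k" "k \<le> K" using k by auto
    let ?\<phi> = "\<lambda>i v. levels blk d1 K (K - k) v i - levels blk d1 K (K - (k - 1)) v (blk k i)"
    have pwi: "?\<phi> i (?xr \<omega>) = level blk d1 K k (x \<omega>) i
         - ups (blk k) (downs (blk k) (dim d1 k) (level blk d1 K k (x \<omega>))) i"
      if "i < dim d1 k" for i \<omega>
      using that k2 blk_lt[OF k2 that] by (simp add: ups_eq lev_xr)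
    have pw: "(\<lambda>\<omega>. sqnorm (dim d1 k) (\<lambda>i. ?\<phi> i (?xr \<omega>))) = (\<lambda>\<omega>. R k (x \<omega>))"
      unfolding R_def by (intro ext sqnorm_cong pwi)
    have "(\<integral>\<omega>. sqnorm (dim d1 k) (\<lambda>i. ?\<phi> i (?xr \<omega>) - c k * \<zeta> k \<omega> i) \<partial>M)
       = (\<integral>\<omega>. sqnorm (dim d1 k) (\<lambda>i. ?\<phi> i (?xr \<omega>)) \<partial>M) + (c k)\<^sup>2 * 1\<^sup>2 * real (dim d1 k)"
    proof (rule noise_split[OF P _ _ I])
      show "gaussian_iso M (dim d1 k) 1 (\<zeta> k)" using assms(12) k by auto
      show "indep_vec M (dim d1 K) x (dim d1 k) (\<zeta> k)" using assms(13) k by auto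
      show "?\<phi> i \<in> borel_measurable (PiM {..<?N} (\<lambda>_. borel))" if "i < dim d1 k" for i
        using blk_lt[OF k2 that] that k2
        by (intro borel_measurable_diff levels_meas) auto
      show "integrable M (\<lambda>\<omega>. sqnorm (dim d1 k) (\<lambda>i. ?\<phi> i (?xr \<omega>)))"
        unfolding pw using int_R[OF k2] by simp
    qed simp
    moreover have "(\<lambda>\<omega>. sqnorm (dim d1 k) (\<lambda>i. ?\<phi> i (?xr \<omega>) - c k * \<zeta> k \<omega> i))
      = (\<lambda>\<omega>. sqnorm (dim d1 k)
              (\<lambda>i. level blk d1 K k (x \<omega>) i
                   - (ups (blk k) (downs (blk k) (dim d1 k) (level blk d1 K k (x \<omega>))) i
                      + (2 powr (- real (k - 1)) * \<sigma>) * \<zeta> k \<omega> i)))"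
      by (intro ext sqnorm_cong, simp only: pwi, simp add: c_def)
    ultimately show ?thesis unfolding pw by simp
  qed
  have ck: "(c k)\<^sup>2 * real (dim d1 k) = \<sigma>\<^sup>2 * real d1 * (1/2) ^ (k - 1)" for k
  proof -
    have "(2::real) powr (- real (k - 1)) = 1 / 2 ^ (k - 1)"
      by (simp add: powr_minus powr_realpow divide_inverse)
    then show ?thesis unfolding c_def dim_def
      by (simp add: power_mult_distrib field_simps power_one_over power2_eq_square)
  qed
  have B: "\<sigma>\<^sup>2 * real d1 + (\<Sum>k\<in>{2..K}. (c k)\<^sup>2 * real (dim d1 k)) < \<sigma>\<^sup>2 * real ?N"
  proof -
    have "(\<Sum>k\<in>{2..K}. (c k)\<^sup>2 * real (dim d1 k)) = \<sigma>\<^sup>2 * real d1 * (1 - (1/2) ^ (K - 1))"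
      unfolding ck sum_distrib_left[symmetric] geom[OF K1] ..
    moreover have "0 < (1/2::real) ^ (K - 1)" by simp
    moreover have "0 < \<sigma>\<^sup>2 * real d1" using assms(3,4) by simp
    moreover have "(2::real) \<le> 2 ^ (K - 1)"
      using power_increasing[of 1 "K - 1" "2::real"] assms(2) by simp
    moreover have "real ?N = 2 ^ (K - 1) * real d1" by (simp add: dim_def)
    ultimately show ?thesis
    proof -
      assume S: "(\<Sum>k\<in>{2..K}. (c k)\<^sup>2 * real (dim d1 k)) = \<sigma>\<^sup>2 * real d1 * (1 - (1/2) ^ (K - 1))"
        and h1: "0 < (1/2::real) ^ (K - 1)" and h2: "0 < \<sigma>\<^sup>2 * real d1"
        and h3: "(2::real) \<le> 2 ^ (K - 1)" and h4: "real ?N = 2 ^ (K - 1) * real d1"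
      have "\<sigma>\<^sup>2 * real d1 * (1/2) ^ (K - 1) > 0" using h1 h2 by simp
      moreover have "\<sigma>\<^sup>2 * real d1 * 2 \<le> \<sigma>\<^sup>2 * real d1 * 2 ^ (K - 1)"
        using h2 h3 by (intro mult_left_mono) auto
      moreover have "\<sigma>\<^sup>2 * real ?N = \<sigma>\<^sup>2 * real d1 * 2 ^ (K - 1)" using h4 by simp
      moreover have "\<sigma>\<^sup>2 * real d1 * (1 - (1/2) ^ (K - 1)) = \<sigma>\<^sup>2 * real d1 - \<sigma>\<^sup>2 * real d1 * (1/2) ^ (K - 1)"
        by (simp add: right_diff_distrib)
      ultimately show ?thesis unfolding S by linarith
    qed
  qed
  have A: "(\<integral>\<omega>. a 1 (x \<omega>) \<partial>M) + (\<Sum>k\<in>{2..K}. \<integral>\<omega>. R k (x \<omega>) \<partial>M) \<le> (\<integral>\<omega>. a K (x \<omega>) \<partial>M)"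
  proof -
    have intS: "integrable M (\<lambda>\<omega>. \<Sum>k\<in>{2..K}. R k (x \<omega>))"
      by (rule Bochner_Integration.integrable_sum) (use int_R in auto)
    have "(\<Sum>k\<in>{2..K}. \<integral>\<omega>. R k (x \<omega>) \<partial>M) = (\<integral>\<omega>. (\<Sum>k\<in>{2..K}. R k (x \<omega>)) \<partial>M)"
      by (rule Bochner_Integration.integral_sum[symmetric]) (use int_R in auto)
    then have "(\<integral>\<omega>. a 1 (x \<omega>) \<partial>M) + (\<Sum>k\<in>{2..K}. \<integral>\<omega>. R k (x \<omega>) \<partial>M)
        = (\<integral>\<omega>. a 1 (x \<omega>) + (\<Sum>k\<in>{2..K}. R k (x \<omega>)) \<partial>M)"
      using Bochner_Integration.integral_add[OF int_a[OF order.refl K1] intS] by simp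
    also have "\<dots> \<le> (\<integral>\<omega>. a K (x \<omega>) \<partial>M)"
    proof (rule integral_mono)
      show "integrable M (\<lambda>\<omega>. a 1 (x \<omega>) + (\<Sum>k\<in>{2..K}. R k (x \<omega>)))"
        using int_a[OF order.refl K1] intS by simp
      show "integrable M (\<lambda>\<omega>. a K (x \<omega>))" by (rule intK)
      fix \<omega>
      have "(\<Sum>k\<in>{2..K}. R k (x \<omega>)) = (\<Sum>k\<in>{2..K}. a k (x \<omega>) - 2 * a (k - 1) (x \<omega>))"
        by (rule sum.cong) (auto simp: Rk)
      then show "a 1 (x \<omega>) + (\<Sum>k\<in>{2..K}. R k (x \<omega>)) \<le> a K (x \<omega>)"
        using telescope[of "\<lambda>k. a k (x \<omega>)" K] a_nn K1 by simp
    qed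
    finally show ?thesis .
  qed
  have S: "(\<Sum>k\<in>{2..K}. \<integral>\<omega>. sqnorm (dim d1 k)
              (\<lambda>i. level blk d1 K k (x \<omega>) i
                   - (ups (blk k) (downs (blk k) (dim d1 k) (level blk d1 K k (x \<omega>))) i
                      + (2 powr (- real (k - 1)) * \<sigma>) * \<zeta> k \<omega> i)) \<partial>M)
     = (\<Sum>k\<in>{2..K}. (\<integral>\<omega>. R k (x \<omega>) \<partial>M) + (c k)\<^sup>2 * real (dim d1 k))"
    by (rule sum.cong[OF refl ek])
  have "(\<integral>\<omega>. sqnorm d1 (\<lambda>i. level blk d1 K 1 (x \<omega>) i - x01 \<omega> i) \<partial>M)
         + (\<Sum>k\<in>{2..K}. \<integral>\<omega>. sqnorm (dim d1 k)
              (\<lambda>i. level blk d1 K k (x \<omega>) i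
                   - (ups (blk k) (downs (blk k) (dim d1 k) (level blk d1 K k (x \<omega>))) i
                      + (2 powr (- real (k - 1)) * \<sigma>) * \<zeta> k \<omega> i)) \<partial>M)
     = ((\<integral>\<omega>. a 1 (x \<omega>) \<partial>M) + (\<Sum>k\<in>{2..K}. \<integral>\<omega>. R k (x \<omega>) \<partial>M))
       + (\<sigma>\<^sup>2 * real d1 + (\<Sum>k\<in>{2..K}. (c k)\<^sup>2 * real (dim d1 k)))"
    unfolding e1 S sum.distrib by linarith
  also have "\<dots> < (\<integral>\<omega>. a K (x \<omega>) \<partial>M) + \<sigma>\<^sup>2 * real ?N" using A B by linarith
  also have "\<dots> = (\<integral>\<omega>. sqnorm ?N (\<lambda>i. x \<omega> i - x0 \<omega> i) \<partial>M)" by (rule eA[symmetric])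
  finally show ?thesis .
qed

end
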